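(* Let $\phi:M_D(\mathbb{C})\to M_D(\mathbb{C})$ be a primitive unital Schwarz map and let $\varrho$ be the Perron–Frobenius eigenvector of $\phi^*$. Then for every $n\in\mathbb{N}$, $$\mathcal{M}_{\phi^n}=\{a\in M_D(\mathbb{C}) : \langle a,a\rangle_\varrho=\langle \phi^n(a),\phi^n(a)\rangle_\varrho \text{ and } \langle a^*,a^*\rangle_\varrho=\langle \phi^n(a)^*,\phi^n(a)^*\rangle_\varrho\}.$$
   Context: $M_D(\mathbb{C})$ is the algebra of complex $D\times D$ matrices. A linear map $\phi$ is a unital Schwarz map if $\phi(I)=I$ and $\phi(a^*a)\ge\phi(a)^*\phi(a)$ for all $a$; it is primitive if some power $\phi^n$ maps every nonzero positive semidefinite matrix to a positive definite matrix. $\phi^*$ denotes the adjoint of $\phi$ with respect to the Hilbert–Schmidt inner product $\langle a,b\rangle=\mathrm{Tr}(a^*b)$. The Perron–Frobenius eigenvector of $\phi^*$ is the unique positive definite $\varrho$ with $\mathrm{Tr}(\varrho)=1$ and $\phi^*(\varrho)=r\varrho$, $r$ the spectral radius (here $r=1$, so $\phi^*(\varrho)=\varrho$). For positive definite $z$, $\langle a,b\rangle_z:=\mathrm{Tr}(z a^*b)$. For a unital Schwarz map $\psi$, the multiplicative domain is $\mathcal{M}_\psi=\{a : \psi(a^*a)=\psi(a)^*\psi(a) \text{ and } \psi(aa^* )=\psi(a)\psi(a)^*\}$. *)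

theory Defs
  imports "HOL-Analysis.Analysis"
begin

text \<open>Complex D x D matrices are modelled as complex^'n^'n, with D = CARD('n).\<close>

type_synonym 'n cmat = "complex^'n^'n"

definition cadj :: "'n::finite cmat \<Rightarrow> 'n cmat" where
  "cadj A = (\<chi> i j. cnj (A $ j $ i))"

definition csmult :: "complex \<Rightarrow> 'n::finite cmat \<Rightarrow> 'n cmat" where
  "csmult c A = (\<chi> i j. c * A $ i $ j)"

definition clinear_map :: "('n::finite cmat \<Rightarrow> 'n cmat) \<Rightarrow> bool" where
  "clinear_map f \<longleftrightarrow> (\<forall>a b. f (a + b) = f a + f b) \<and> (\<forall>c a. f (csmult c a) = csmult c (f a))"

definition qform :: "'n::finite cmat \<Rightarrow> complex^'n \<Rightarrow> complex" where
  "qform A v = (\<Sum>i\<in>UNIV. cnj (v $ i) * (A *v v) $ i)"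

definition psd :: "'n::finite cmat \<Rightarrow> bool" where
  "psd A \<longleftrightarrow> (\<forall>v. Im (qform A v) = 0 \<and> Re (qform A v) \<ge> 0)"

definition pd :: "'n::finite cmat \<Rightarrow> bool" where
  "pd A \<longleftrightarrow> (\<forall>v. v \<noteq> 0 \<longrightarrow> Im (qform A v) = 0 \<and> Re (qform A v) > 0)"

definition loewner_ge :: "'n::finite cmat \<Rightarrow> 'n cmat \<Rightarrow> bool" where
  "loewner_ge A B \<longleftrightarrow> psd (A - B)"

definition unital_schwarz :: "('n::finite cmat \<Rightarrow> 'n cmat) \<Rightarrow> bool" where
  "unital_schwarz f \<longleftrightarrow> clinear_map f \<and> f (mat 1) = mat 1 \<and>
     (\<forall>a. loewner_ge (f (cadj a ** a)) (cadj (f a) ** f a))"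

definition primitive_map :: "('n::finite cmat \<Rightarrow> 'n cmat) \<Rightarrow> bool" where
  "primitive_map f \<longleftrightarrow> (\<exists>n. \<forall>a. psd a \<and> a \<noteq> 0 \<longrightarrow> pd ((f ^^ n) a))"

definition hs_inner :: "'n::finite cmat \<Rightarrow> 'n cmat \<Rightarrow> complex" where
  "hs_inner a b = trace (cadj a ** b)"

definition hs_adjoint :: "('n::finite cmat \<Rightarrow> 'n cmat) \<Rightarrow> ('n cmat \<Rightarrow> 'n cmat)" where
  "hs_adjoint f = (THE g. \<forall>a b. hs_inner a (f b) = hs_inner (g a) b)"

definition winner :: "'n::finite cmat \<Rightarrow> 'n cmat \<Rightarrow> 'n cmat \<Rightarrow> complex" where
  "winner z a b = trace (z ** cadj a ** b)"

definition mult_domain :: "('n::finite cmat \<Rightarrow> 'n cmat) \<Rightarrow> 'n cmat set" where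
  "mult_domain g = {a. g (cadj a ** a) = cadj (g a) ** g a \<and> g (a ** cadj a) = g a ** cadj (g a)}"

end

theory Submission
  imports Defs
begin


definition Qf :: "('a \<Rightarrow> 'a \<Rightarrow> complex) \<Rightarrow> 'a set \<Rightarrow> ('a \<Rightarrow> complex) \<Rightarrow> complex" where
  "Qf A I v = (\<Sum>i\<in>I. \<Sum>j\<in>I. cnj (v i) * A i j * v j)"

definition Sf :: "('a \<Rightarrow> 'a \<Rightarrow> complex) \<Rightarrow> ('a \<Rightarrow> 'a \<Rightarrow> complex) \<Rightarrow> 'a set \<Rightarrow> complex" where
  "Sf r x I = (\<Sum>i\<in>I. \<Sum>j\<in>I. r i j * x j i)"

lemma Qf_restrict:
  assumes "finite I" "K \<subseteq> I" "\<forall>y\<in>I - K. v y = 0"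
  shows "Qf A I v = Qf A K v"
proof -
  have "Qf A I v = (\<Sum>i\<in>K. \<Sum>j\<in>I. cnj (v i) * A i j * v j)"
    unfolding Qf_def by (rule sum.mono_neutral_right) (use assms in auto)
  also have "\<dots> = Qf A K v" unfolding Qf_def
  proof (rule sum.cong[OF refl])
    fix i assume "i \<in> K"
    show "(\<Sum>j\<in>I. cnj (v i) * A i j * v j) = (\<Sum>j\<in>K. cnj (v i) * A i j * v j)"
      by (rule sum.mono_neutral_right) (use assms in auto)
  qed
  finally show ?thesis .
qed

lemma Qf_cong: "(\<And>y. y \<in> I \<Longrightarrow> v y = w y) \<Longrightarrow> Qf A I v = Qf A I w"
  unfolding Qf_def by simp

lemma real_lin_zero:
  fixes z c :: complex
  assumes "\<forall>s::real. Im (of_real s * z + c) = 0 \<and> Re (of_real s * z + c) \<ge> 0"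
  shows "z = 0"
proof -
  have i0: "Im c = 0" using assms[rule_format, of 0] by simp
  have "Im z = 0" using assms[rule_format, of 1] i0 by simp
  moreover have "Re z = 0"
  proof (rule ccontr)
    assume h: "Re z \<noteq> 0"
    have "Re (of_real (-(Re c + 1) / Re z) * z + c) \<ge> 0" using assms by blast
    moreover have "Re (of_real (-(Re c + 1) / Re z) * z + c) = -1" using h by (simp add: field_simps)
    ultimately show False by simp
  qed
  ultimately show ?thesis by (simp add: complex_eq_iff)
qed

lemma Qf_two:
  assumes "i \<noteq> j"
  shows "Qf A {i,j} v = cnj (v i) * A i i * v i + cnj (v i) * A i j * v j + cnj (v j) * A j i * v i + cnj (v j) * A j j * v j"
  using assms unfolding Qf_def by (simp add: algebra_simps)

lemma Qf_one: "Qf A {i} v = cnj (v i) * A i i * v i"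
  unfolding Qf_def by simp

lemma psd_zero_diag:
  assumes "finite I" and psd: "\<forall>v. Im (Qf x I v) = 0 \<and> Re (Qf x I v) \<ge> 0"
    and "i \<in> I" "j \<in> I" "x i i = 0"
  shows "x i j = 0 \<and> x j i = 0"
proof (cases "i = j")
  case True then show ?thesis using assms by simp
next
  case False
  have Q: "Qf x I v = cnj (v i) * x i j * v j + cnj (v j) * x j i * v i + cnj (v j) * x j j * v j"
    if "\<forall>y\<in>I - {i,j}. v y = 0" for v
    using Qf_restrict[OF assms(1), of "{i,j}" v x] that assms(3,4,5) Qf_two[OF False, of x v] by simp
  define v1 where "v1 = (\<lambda>s::real. \<lambda>y. if y = i then complex_of_real s else if y = j then 1 else 0)"
  define v2 where "v2 = (\<lambda>s::real. \<lambda>y. if y = i then \<i> * complex_of_real s else if y = j then 1 else 0)"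
  have "\<forall>s::real. Im (of_real s * (x i j + x j i) + x j j) = 0 \<and> Re (of_real s * (x i j + x j i) + x j j) \<ge> 0"
  proof
    fix s
    have "Qf x I (v1 s) = of_real s * (x i j + x j i) + x j j"
      using Q[of "v1 s"] False by (simp add: v1_def algebra_simps)
    then show "Im (of_real s * (x i j + x j i) + x j j) = 0 \<and> Re (of_real s * (x i j + x j i) + x j j) \<ge> 0"
      using psd by metis
  qed
  then have e1: "x i j + x j i = 0" by (rule real_lin_zero)
  have "\<forall>s::real. Im (of_real s * (\<i> * (x j i - x i j)) + x j j) = 0 \<and> Re (of_real s * (\<i> * (x j i - x i j)) + x j j) \<ge> 0"
  proof
    fix s
    have "Qf x I (v2 s) = of_real s * (\<i> * (x j i - x i j)) + x j j"
      using Q[of "v2 s"] False by (simp add: v2_def algebra_simps)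
    then show "Im (of_real s * (\<i> * (x j i - x i j)) + x j j) = 0 \<and> Re (of_real s * (\<i> * (x j i - x i j)) + x j j) \<ge> 0"
      using psd by metis
  qed
  then have "\<i> * (x j i - x i j) = 0" by (rule real_lin_zero)
  then have "x j i = x i j" by simp
  with e1 show ?thesis by simp
qed

lemma real_Qf_herm:
  assumes "finite I" and re: "\<forall>v. Im (Qf A I v) = 0"
    and "i \<in> I" "j \<in> I"
  shows "A j i = cnj (A i j)"
proof -
  have d: "Im (A k k) = 0" if "k \<in> I" for k
  proof -
    have "Qf A I (\<lambda>y. if y = k then 1 else 0) = A k k"
      using Qf_restrict[OF assms(1), of "{k}" "\<lambda>y. if y = k then 1 else 0" A] that Qf_one[of A k] by simp
    then show ?thesis using re by metis
  qed
  show ?thesis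
  proof (cases "i = j")
    case True then show ?thesis using d[OF assms(3)] by (simp add: complex_eq_iff)
  next
    case False
    have Q: "Qf A I v = cnj (v i) * A i i * v i + cnj (v i) * A i j * v j + cnj (v j) * A j i * v i + cnj (v j) * A j j * v j"
      if "\<forall>y\<in>I - {i,j}. v y = 0" for v
      using Qf_restrict[OF assms(1), of "{i,j}" v A] that assms(3,4) Qf_two[OF False, of A v] by simp
    have "Qf A I (\<lambda>y. if y = i then 1 else if y = j then 1 else 0) = A i i + A i j + A j i + A j j"
      using Q False by simp
    then have "Im (A i i + A i j + A j i + A j j) = 0" using re by metis
    then have h1: "Im (A i j + A j i) = 0" using d assms(3,4) by simp
    have "Qf A I (\<lambda>y. if y = i then \<i> else if y = j then 1 else 0) = A i i - \<i> * A i j + \<i> * A j i + A j j"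
      using Q False by (simp add: algebra_simps)
    then have "Im (A i i - \<i> * A i j + \<i> * A j i + A j j) = 0" using re by metis
    then have h2: "Re (A j i - A i j) = 0" using d assms(3,4) by simp
    show ?thesis using h1 h2 by (simp add: complex_eq_iff)
  qed
qed

lemma Qf_insert:
  assumes "finite J" "k \<notin> J"
  shows "Qf A (insert k J) w = cnj (w k) * A k k * w k + (\<Sum>j\<in>J. cnj (w k) * A k j * w j)
     + (\<Sum>i\<in>J. cnj (w i) * A i k * w k) + Qf A J w"
  using assms unfolding Qf_def by (simp add: sum.distrib algebra_simps)

lemma Sf_insert:
  assumes "finite J" "k \<notin> J"
  shows "Sf r x (insert k J) = r k k * x k k + (\<Sum>j\<in>J. r k j * x j k)
     + (\<Sum>i\<in>J. r i k * x k i) + Sf r x J"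
  using assms unfolding Sf_def by (simp add: sum.distrib algebra_simps)

lemma pd_real:
  assumes "\<forall>v. (\<exists>i\<in>I. v i \<noteq> 0) \<longrightarrow> Im (Qf r I v) = 0 \<and> Re (Qf r I v) > 0"
  shows "\<forall>v. Im (Qf r I v) = 0"
proof
  fix v
  show "Im (Qf r I v) = 0"
  proof (cases "\<exists>i\<in>I. v i \<noteq> 0")
    case True then show ?thesis using assms by blast
  next
    case False then show ?thesis by (simp add: Qf_def)
  qed
qed



lemma key_step_pd:
  fixes r :: "'a \<Rightarrow> 'a \<Rightarrow> complex"
  assumes fin: "finite J" and kJ: "k \<notin> J"
    and pd: "\<forall>v. (\<exists>i\<in>insert k J. v i \<noteq> 0) \<longrightarrow> Im (Qf r (insert k J) v) = 0 \<and> Re (Qf r (insert k J) v) > 0"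
    and al: "r k k \<noteq> 0"
  shows "\<forall>v. (\<exists>i\<in>J. v i \<noteq> 0) \<longrightarrow> Im (Qf (\<lambda>i j. r i j - r i k * r k j / r k k) J v) = 0
          \<and> Re (Qf (\<lambda>i j. r i j - r i k * r k j / r k k) J v) > 0"
proof (intro allI impI)
  fix v :: "'a \<Rightarrow> complex" assume ex: "\<exists>i\<in>J. v i \<noteq> 0"
  define \<alpha> where "\<alpha> = r k k"
  define \<beta> where "\<beta> = (\<Sum>j\<in>J. r k j * v j)"
  define \<gamma> where "\<gamma> = (\<Sum>i\<in>J. cnj (v i) * r i k)"
  define w where "w = v(k := - \<beta> / \<alpha>)"
  have wJ: "\<And>y. y \<in> J \<Longrightarrow> w y = v y" using kJ by (auto simp: w_def)
  have "Qf r (insert k J) w = cnj (w k) * \<alpha> * w k + (\<Sum>j\<in>J. cnj (w k) * r k j * v j)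
     + (\<Sum>i\<in>J. cnj (v i) * r i k * w k) + Qf r J v"
    using Qf_insert[OF fin kJ, of r w] wJ Qf_cong[of J w v r] unfolding \<alpha>_def by simp
  also have "\<dots> = cnj (w k) * (\<alpha> * w k + \<beta>) + \<gamma> * w k + Qf r J v"
    by (simp add: \<beta>_def \<gamma>_def sum_distrib_left sum_distrib_right algebra_simps)
  also have "\<alpha> * w k + \<beta> = 0" using al by (simp add: w_def \<alpha>_def)
  moreover have "w k = - \<beta> / \<alpha>" by (simp add: w_def)
  ultimately have e1: "Qf r (insert k J) w = Qf r J v - \<gamma> * \<beta> / \<alpha>" by simp
  have "Qf (\<lambda>i j. r i j - r i k * r k j / r k k) J v
      = Qf r J v - (\<Sum>i\<in>J. \<Sum>j\<in>J. (cnj (v i) * r i k) * (r k j * v j)) / \<alpha>"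
    unfolding Qf_def \<alpha>_def by (simp add: sum_subtractf sum_divide_distrib algebra_simps)
  also have "(\<Sum>i\<in>J. \<Sum>j\<in>J. (cnj (v i) * r i k) * (r k j * v j)) = \<gamma> * \<beta>"
    by (simp add: \<gamma>_def \<beta>_def sum_product)
  finally have "Qf (\<lambda>i j. r i j - r i k * r k j / r k k) J v = Qf r (insert k J) w" using e1 by simp
  moreover have "\<exists>i\<in>insert k J. w i \<noteq> 0" using ex wJ by auto
  ultimately show "Im (Qf (\<lambda>i j. r i j - r i k * r k j / r k k) J v) = 0
          \<and> Re (Qf (\<lambda>i j. r i j - r i k * r k j / r k k) J v) > 0" using pd by metis
qed

lemma key_step_S:
  fixes r x :: "'a \<Rightarrow> 'a \<Rightarrow> complex"
  assumes fin: "finite J" and kJ: "k \<notin> J"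
    and herm: "\<forall>i\<in>insert k J. \<forall>j\<in>insert k J. r j i = cnj (r i j)"
    and al: "r k k \<noteq> 0" and alr: "cnj (r k k) = r k k"
  shows "Sf r x (insert k J) = r k k * Qf x (insert k J) (\<lambda>c. if c = k then 1 else r c k / r k k)
          + Sf (\<lambda>i j. r i j - r i k * r k j / r k k) x J"
proof -
  define \<alpha> where "\<alpha> = r k k"
  define u where "u = (\<lambda>c. if c = k then 1 else r c k / \<alpha>)"
  have uJ: "u c = r c k / \<alpha>" "cnj (u c) = r k c / \<alpha>" if "c \<in> J" for c
  proof -
    have ck: "c \<noteq> k" using that kJ by auto
    have h: "r k c = cnj (r c k)" using herm that by blast
    show "u c = r c k / \<alpha>" using ck by (simp add: u_def)
    show "cnj (u c) = r k c / \<alpha>" using ck h alr by (simp add: u_def \<alpha>_def)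
  qed
  have uk: "u k = 1" by (simp add: u_def)
  have "\<alpha> * Qf x (insert k J) u = \<alpha> * x k k + (\<Sum>j\<in>J. r k j * x j k) + (\<Sum>i\<in>J. r i k * x k i)
      + \<alpha> * Qf x J u"
  proof -
    have "\<alpha> * Qf x (insert k J) u = \<alpha> * x k k + (\<Sum>j\<in>J. \<alpha> * (x k j * (r j k / \<alpha>)))
       + (\<Sum>i\<in>J. \<alpha> * (r k i / \<alpha> * x i k)) + \<alpha> * Qf x J u"
      unfolding Qf_insert[OF fin kJ] using uJ uk
      by (simp add: sum_distrib_left distrib_left)
    also have "\<dots> = \<alpha> * x k k + (\<Sum>j\<in>J. r j k * x k j) + (\<Sum>i\<in>J. r k i * x i k) + \<alpha> * Qf x J u"
      using al by (simp add: \<alpha>_def mult.commute)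
    finally show ?thesis by simp
  qed
  moreover have "\<alpha> * Qf x J u = (\<Sum>i\<in>J. \<Sum>j\<in>J. r i k * r k j * x j i) / \<alpha>"
  proof -
    have "\<alpha> * Qf x J u = (\<Sum>c\<in>J. \<Sum>d\<in>J. r k c * x c d * r d k / \<alpha>)"
      unfolding Qf_def using uJ al
      by (simp add: sum_distrib_left \<alpha>_def)
    also have "\<dots> = (\<Sum>d\<in>J. \<Sum>c\<in>J. r d k * r k c * x c d) / \<alpha>"
      by (subst sum.swap) (simp add: sum_divide_distrib mult.commute mult.left_commute)
    finally show ?thesis by simp
  qed
  moreover have "Sf r x J = Sf (\<lambda>i j. r i j - r i k * r k j / r k k) x J
       + (\<Sum>i\<in>J. \<Sum>j\<in>J. r i k * r k j * x j i) / \<alpha>"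
  proof -
    have "Sf (\<lambda>i j. r i j - r i k * r k j / r k k) x J
       = (\<Sum>i\<in>J. \<Sum>j\<in>J. r i j * x j i - r i k * r k j * x j i / \<alpha>)"
      unfolding Sf_def \<alpha>_def by (simp add: left_diff_distrib)
    also have "\<dots> = Sf r x J - (\<Sum>i\<in>J. \<Sum>j\<in>J. r i k * r k j * x j i) / \<alpha>"
      unfolding Sf_def by (simp add: sum_subtractf sum_divide_distrib)
    finally show ?thesis by simp
  qed
  ultimately show ?thesis
    unfolding Sf_insert[OF fin kJ] u_def[symmetric] \<alpha>_def[symmetric]
    by (simp add: algebra_simps)
qed

lemma key:
  fixes x :: "'a \<Rightarrow> 'a \<Rightarrow> complex"
  assumes "finite I"
  shows "\<And>r. (\<forall>v. (\<exists>i\<in>I. v i \<noteq> 0) \<longrightarrow> Im (Qf r I v) = 0 \<and> Re (Qf r I v) > 0)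
     \<Longrightarrow> (\<forall>v. Im (Qf x I v) = 0 \<and> Re (Qf x I v) \<ge> 0)
     \<Longrightarrow> Im (Sf r x I) = 0 \<and> Re (Sf r x I) \<ge> 0 \<and> (Sf r x I = 0 \<longrightarrow> (\<forall>i\<in>I. x i i = 0))"
  using assms
proof (induction I rule: finite_induct)
  case empty
  then show ?case by (simp add: Sf_def)
next
  case (insert k J r)
  note fin = insert.hyps(1) and kJ = insert.hyps(2)
  note pd = insert.prems(1) and psd = insert.prems(2)
  have finI: "finite (insert k J)" using fin by simp
  have herm: "\<forall>i\<in>insert k J. \<forall>j\<in>insert k J. r j i = cnj (r i j)"
    using real_Qf_herm[OF finI pd_real[OF pd]] by blast
  have Qk: "Qf r (insert k J) (\<lambda>y. if y = k then 1 else 0) = r k k"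
    using Qf_restrict[OF finI, of "{k}" "\<lambda>y. if y = k then 1 else 0" r] Qf_one[of r k] by simp
  have "Im (r k k) = 0 \<and> Re (r k k) > 0"
    using pd[rule_format, of "\<lambda>y. if y = k then 1 else 0"] Qk by simp
  then have alr: "cnj (r k k) = r k k" and alpos: "Re (r k k) > 0" and al: "r k k \<noteq> 0"
    by (auto simp: complex_eq_iff)
  have aleq: "r k k = of_real (Re (r k k))" using alr by (simp add: complex_eq_iff)
  have psdJ: "\<forall>v. Im (Qf x J v) = 0 \<and> Re (Qf x J v) \<ge> 0"
  proof
    fix v :: "'a \<Rightarrow> complex"
    have "Qf x (insert k J) (v(k := 0)) = Qf x J (v(k := 0))"
      by (rule Qf_restrict) (use finI in auto)
    also have "\<dots> = Qf x J v" by (rule Qf_cong) (use kJ in auto)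
    finally show "Im (Qf x J v) = 0 \<and> Re (Qf x J v) \<ge> 0" using psd by metis
  qed
  define r' where "r' = (\<lambda>i j. r i j - r i k * r k j / r k k)"
  define u where "u = (\<lambda>c. if c = k then 1 else r c k / r k k)"
  have pd': "\<forall>v. (\<exists>i\<in>J. v i \<noteq> 0) \<longrightarrow> Im (Qf r' J v) = 0 \<and> Re (Qf r' J v) > 0"
    unfolding r'_def by (rule key_step_pd[OF fin kJ pd al])
  have IH: "Im (Sf r' x J) = 0 \<and> Re (Sf r' x J) \<ge> 0 \<and> (Sf r' x J = 0 \<longrightarrow> (\<forall>i\<in>J. x i i = 0))"
    using insert.IH[OF pd' psdJ] .
  have dec: "Sf r x (insert k J) = r k k * Qf x (insert k J) u + Sf r' x J"
    unfolding r'_def u_def by (rule key_step_S[OF fin kJ herm al alr])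
  have qu: "Im (Qf x (insert k J) u) = 0 \<and> Re (Qf x (insert k J) u) \<ge> 0" using psd by blast
  have t1: "Im (r k k * Qf x (insert k J) u) = 0 \<and> Re (r k k * Qf x (insert k J) u) \<ge> 0"
    using qu alpos alr by (subst aleq, simp)
  show ?case
  proof (intro conjI impI)
    show "Im (Sf r x (insert k J)) = 0" using dec t1 IH by simp
    show "Re (Sf r x (insert k J)) \<ge> 0" using dec t1 IH by simp
    assume z: "Sf r x (insert k J) = 0"
    have "Re (r k k * Qf x (insert k J) u) + Re (Sf r' x J) = 0"
      using z dec by (metis plus_complex.sel(1) zero_complex.sel(1))
    then have "Re (r k k * Qf x (insert k J) u) = 0" "Re (Sf r' x J) = 0"
      using t1 IH by linarith+
    then have z1: "r k k * Qf x (insert k J) u = 0" and z2: "Sf r' x J = 0"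
      using t1 IH by (simp_all add: complex_eq_iff)
    have dJ: "\<forall>i\<in>J. x i i = 0" using IH z2 by blast
    have off: "x c d = 0" if "c \<in> J" "d \<in> insert k J" for c d
      using psd_zero_diag[OF finI psd, of c d] dJ that by blast
    have off2: "x d c = 0" if "c \<in> J" "d \<in> insert k J" for c d
      using psd_zero_diag[OF finI psd, of c d] dJ that by blast
    have "Qf x (insert k J) u = x k k"
      unfolding Qf_insert[OF fin kJ] using off off2
      by (simp add: u_def Qf_def)
    then have xk: "x k k = 0" using z1 al by simp
    show "\<forall>i\<in>insert k J. x i i = 0" using xk dJ by simp
  qed
qed



lemma qform_Qf: "qform A v = Qf (\<lambda>i j. A$i$j) UNIV (\<lambda>i. v$i)"
  unfolding qform_def Qf_def matrix_vector_mult_def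
  by (simp add: sum_distrib_left mult.assoc)

lemma psd_Qf:
  assumes "psd A"
  shows "\<forall>v. Im (Qf (\<lambda>i j. A$i$j) UNIV v) = 0 \<and> Re (Qf (\<lambda>i j. A$i$j) UNIV v) \<ge> 0"
proof
  fix v :: "'a \<Rightarrow> complex"
  have "Qf (\<lambda>i j. A$i$j) UNIV v = qform A (\<chi> i. v i)" by (simp add: qform_Qf)
  then show "Im (Qf (\<lambda>i j. A$i$j) UNIV v) = 0 \<and> Re (Qf (\<lambda>i j. A$i$j) UNIV v) \<ge> 0"
    using assms unfolding psd_def by metis
qed

lemma pd_Qf:
  assumes "pd A"
  shows "\<forall>v. (\<exists>i\<in>UNIV. v i \<noteq> 0) \<longrightarrow> Im (Qf (\<lambda>i j. A$i$j) UNIV v) = 0 \<and> Re (Qf (\<lambda>i j. A$i$j) UNIV v) > 0"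
proof (intro allI impI)
  fix v :: "'a \<Rightarrow> complex" assume "\<exists>i\<in>UNIV. v i \<noteq> 0"
  then have nz: "(\<chi> i. v i) \<noteq> 0" by (auto simp: vec_eq_iff)
  have "Qf (\<lambda>i j. A$i$j) UNIV v = qform A (\<chi> i. v i)" by (simp add: qform_Qf)
  then show "Im (Qf (\<lambda>i j. A$i$j) UNIV v) = 0 \<and> Re (Qf (\<lambda>i j. A$i$j) UNIV v) > 0"
    using assms nz unfolding pd_def by metis
qed

lemma psd_herm: assumes "psd A" shows "cadj A = A"
proof -
  have h: "A$j$i = cnj (A$i$j)" for i j
  proof -
    have "\<forall>v. Im (Qf (\<lambda>i j. A$i$j) UNIV v) = 0" using psd_Qf[OF assms] by blast
    from real_Qf_herm[OF finite_class.finite_UNIV this] show ?thesis by blast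
  qed
  show ?thesis unfolding cadj_def by (simp add: vec_eq_iff h[symmetric])
qed

lemma pd_herm: assumes "pd A" shows "cadj A = A"
proof -
  have h: "A$j$i = cnj (A$i$j)" for i j
    using real_Qf_herm[OF finite_class.finite_UNIV pd_real[OF pd_Qf[OF assms]]] by blast
  show ?thesis unfolding cadj_def by (simp add: vec_eq_iff h[symmetric])
qed

lemma trace_Sf: "trace (r ** X) = Sf (\<lambda>i j. r$i$j) (\<lambda>i j. X$i$j) UNIV"
  unfolding trace_def Sf_def matrix_matrix_mult_def by simp

lemma trace_pos:
  assumes "pd r" "psd X"
  shows "Im (trace (r ** X)) = 0 \<and> Re (trace (r ** X)) \<ge> 0 \<and> (trace (r ** X) = 0 \<longrightarrow> X = 0)"
proof -
  have k: "Im (trace (r ** X)) = 0 \<and> Re (trace (r ** X)) \<ge> 0 \<and> (trace (r ** X) = 0 \<longrightarrow> (\<forall>i\<in>UNIV. X$i$i = 0))"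
    unfolding trace_Sf by (rule key[OF finite_class.finite_UNIV pd_Qf[OF assms(1)] psd_Qf[OF assms(2)]])
  have "X = 0" if "\<forall>i\<in>UNIV. X$i$i = 0"
  proof -
    have "X$i$j = 0" for i j
      using psd_zero_diag[OF finite_class.finite_UNIV psd_Qf[OF assms(2)], of i j] that by blast
    then show ?thesis by (simp add: vec_eq_iff)
  qed
  with k show ?thesis by blast
qed



lemma cadj_cadj[simp]: "cadj (cadj A) = A" by (simp add: cadj_def vec_eq_iff)
lemma cadj_add[simp]: "cadj (A + B) = cadj A + cadj B" by (simp add: cadj_def vec_eq_iff)
lemma cadj_diff[simp]: "cadj (A - B) = cadj A - cadj B" by (simp add: cadj_def vec_eq_iff)
lemma cadj_csmult[simp]: "cadj (csmult c A) = csmult (cnj c) (cadj A)" by (simp add: cadj_def csmult_def vec_eq_iff)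
lemma cadj_mat1[simp]: "cadj (mat 1 :: 'n::finite cmat) = mat 1" by (simp add: cadj_def mat_def vec_eq_iff)
lemma cadj_mult[simp]: "cadj (A ** B) = cadj B ** cadj A"
  by (simp add: cadj_def matrix_matrix_mult_def vec_eq_iff mult.commute)
lemma csmult_add[simp]: "csmult c (A + B) = csmult c A + csmult c B" by (simp add: csmult_def vec_eq_iff algebra_simps)
lemma csmult_diff[simp]: "csmult c (A - B) = csmult c A - csmult c B" by (simp add: csmult_def vec_eq_iff algebra_simps)
lemma csmult_csmult[simp]: "csmult c (csmult d A) = csmult (c * d) A" by (simp add: csmult_def vec_eq_iff)
lemma csmult_one[simp]: "csmult 1 A = A" by (simp add: csmult_def vec_eq_iff)
lemma csmult_zero[simp]: "csmult 0 A = 0" by (simp add: csmult_def vec_eq_iff)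
lemma csmult_mult_left[simp]: "csmult c A ** B = csmult c (A ** B)"
  by (simp add: csmult_def matrix_matrix_mult_def vec_eq_iff sum_distrib_left mult.assoc)
lemma csmult_mult_right[simp]: "A ** csmult c B = csmult c (A ** B)"
  by (simp add: csmult_def matrix_matrix_mult_def vec_eq_iff sum_distrib_left algebra_simps)

lemma clin_add: "clinear_map f \<Longrightarrow> f (a + b) = f a + f b" by (simp add: clinear_map_def)
lemma clin_smult: "clinear_map f \<Longrightarrow> f (csmult c a) = csmult c (f a)" by (simp add: clinear_map_def)
lemma clin_zero: "clinear_map f \<Longrightarrow> f 0 = 0"
  using clin_add[of f 0 0] by simp
lemma clin_diff: "clinear_map f \<Longrightarrow> f (a - b) = f a - f b"
  using clin_add[of f "a - b" b] by (simp add: algebra_simps)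
lemma clin_sum: assumes "clinear_map f" "finite S" shows "f (\<Sum>x\<in>S. g x) = (\<Sum>x\<in>S. f (g x))"
  using assms(2) by (induction S rule: finite_induct) (auto simp: clin_zero[OF assms(1)] clin_add[OF assms(1)])

lemma hs_inner_sum: "hs_inner a b = (\<Sum>i\<in>UNIV. \<Sum>j\<in>UNIV. cnj (a$i$j) * b$i$j)"
  unfolding hs_inner_def trace_def cadj_def matrix_matrix_mult_def
  by (simp only: vec_lambda_beta) (rule sum.swap)

lemma hs_inner_add: "hs_inner a (b + c) = hs_inner a b + hs_inner a c"
  by (simp add: hs_inner_sum algebra_simps sum.distrib)
lemma hs_inner_zero: "hs_inner a 0 = 0"
  by (simp add: hs_inner_sum)
lemma hs_inner_smult: "hs_inner a (csmult c b) = c * hs_inner a b"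
  by (simp add: hs_inner_sum csmult_def sum_distrib_left algebra_simps)
lemma hs_inner_setsum: assumes "finite S" shows "hs_inner a (\<Sum>x\<in>S. g x) = (\<Sum>x\<in>S. hs_inner a (g x))"
  using assms by (induction S rule: finite_induct) (auto simp: hs_inner_zero hs_inner_add)

definition Emat :: "'n::finite \<Rightarrow> 'n \<Rightarrow> 'n cmat" where
  "Emat k l = (\<chi> i j. if i = k \<and> j = l then 1 else 0)"

lemma hs_inner_E: "hs_inner y (Emat k l) = cnj (y$k$l)"
proof -
  have "hs_inner y (Emat k l) = (\<Sum>i\<in>UNIV. if i = k then (\<Sum>j\<in>UNIV. if j = l then cnj (y$i$j) else 0) else 0)"
    unfolding hs_inner_sum Emat_def by (intro sum.cong refl) (auto simp: if_distrib cong: if_cong)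
  also have "\<dots> = cnj (y$k$l)" by simp
  finally show ?thesis .
qed

lemma mat_decomp: "b = (\<Sum>k\<in>UNIV. \<Sum>l\<in>UNIV. csmult (b$k$l) (Emat k l))"
proof -
  have "(\<Sum>k\<in>UNIV. \<Sum>l\<in>UNIV. csmult (b$k$l) (Emat k l)) $ i $ j = b$i$j" for i j
  proof -
    have "(\<Sum>k\<in>UNIV. \<Sum>l\<in>UNIV. csmult (b$k$l) (Emat k l)) $ i $ j
        = (\<Sum>k\<in>UNIV. if k = i then (\<Sum>l\<in>UNIV. if l = j then b$k$l else 0) else 0)"
      unfolding sum_component csmult_def Emat_def by (intro sum.cong refl) (auto simp: if_distrib cong: if_cong)
    also have "\<dots> = b$i$j" by simp
    finally show ?thesis .
  qed
  then show ?thesis by (simp add: vec_eq_iff)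
qed

lemma allE2: "\<forall>a b. P a b \<Longrightarrow> P a b" by blast

lemma adjoint_prop:
  fixes f :: "'n::finite cmat \<Rightarrow> 'n cmat"
  assumes lin: "clinear_map f"
  shows "hs_inner a (f b) = hs_inner (hs_adjoint f a) b"
proof -
  define P where "P = (\<lambda>g::'n cmat \<Rightarrow> 'n cmat. \<forall>a b. hs_inner a (f b) = hs_inner (g a) b)"
  define g0 where "g0 = (\<lambda>a::'n cmat. \<chi> k l. cnj (hs_inner a (f (Emat k l))))"
  have ex: "P g0" unfolding P_def
  proof (intro allI)
    fix a b :: "'n cmat"
    have "f b = (\<Sum>k\<in>UNIV. \<Sum>l\<in>UNIV. csmult (b$k$l) (f (Emat k l)))"
    proof -
      have "f b = f (\<Sum>k\<in>UNIV. \<Sum>l\<in>UNIV. csmult (b$k$l) (Emat k l))"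
        by (rule arg_cong[where f=f], rule mat_decomp)
      then show ?thesis by (simp add: clin_sum[OF lin] clin_smult[OF lin])
    qed
    then have "hs_inner a (f b) = (\<Sum>k\<in>UNIV. \<Sum>l\<in>UNIV. b$k$l * hs_inner a (f (Emat k l)))"
      by (simp add: hs_inner_setsum hs_inner_smult)
    also have "\<dots> = hs_inner (g0 a) b"
      by (simp only: hs_inner_sum[of "g0 a" b]) (simp add: g0_def mult.commute)
    finally show "hs_inner a (f b) = hs_inner (g0 a) b" .
  qed
  have un: "g = g0" if "P g" for g
  proof -
    have "g a $ k $ l = g0 a $ k $ l" for a k l
    proof -
      have e1: "hs_inner a (f (Emat k l)) = hs_inner (g a) (Emat k l)"
        using that unfolding P_def by (rule allE2)
      have e2: "hs_inner a (f (Emat k l)) = hs_inner (g0 a) (Emat k l)"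
        using ex unfolding P_def by (rule allE2)
      have "hs_inner (g a) (Emat k l) = hs_inner (g0 a) (Emat k l)"
        using e1 e2 by simp
      then show ?thesis by (simp add: hs_inner_E)
    qed
    then show ?thesis by (simp add: fun_eq_iff vec_eq_iff)
  qed
  have "P (hs_adjoint f)" unfolding hs_adjoint_def P_def[symmetric]
    by (rule theI[of P g0, OF ex un])
  then show ?thesis unfolding P_def by blast
qed



lemma madd_rdistrib: "((B::'n::finite cmat) + C) ** A = B ** A + C ** A"
  by (simp add: matrix_matrix_mult_def vec_eq_iff sum.distrib distrib_right)

lemma schwarz_star:
  fixes \<phi> :: "'n::finite cmat \<Rightarrow> 'n cmat"
  assumes "unital_schwarz \<phi>"
  shows "\<phi> (cadj b) = cadj (\<phi> b)"
proof -
  have lin: "clinear_map \<phi>" and unit: "\<phi> (mat 1) = mat 1"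
    and sw: "\<And>a. psd (\<phi> (cadj a ** a) - cadj (\<phi> a) ** \<phi> a)"
    using assms unfolding unital_schwarz_def loewner_ge_def by auto
  define D where "D = \<phi> (cadj b) - cadj (\<phi> b)"
  define P where "P = \<phi> (cadj b ** b) - cadj (\<phi> b) ** \<phi> b"
  have hP: "cadj P = P" unfolding P_def by (rule psd_herm[OF sw])
  have H: "csmult t (cadj D) = csmult (cnj t) D" for t
  proof -
    define a where "a = mat 1 + csmult t b"
    have ca: "cadj a ** a = mat 1 + csmult t b + csmult (cnj t) (cadj b) + csmult (cnj t * t) (cadj b ** b)"
      unfolding a_def by (simp add: matrix_add_ldistrib madd_rdistrib algebra_simps)
    have pa: "\<phi> a = mat 1 + csmult t (\<phi> b)"
      unfolding a_def by (simp add: clin_add[OF lin] clin_smult[OF lin] unit)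
    have cpa: "cadj (\<phi> a) ** \<phi> a = mat 1 + csmult t (\<phi> b) + csmult (cnj t) (cadj (\<phi> b))
        + csmult (cnj t * t) (cadj (\<phi> b) ** \<phi> b)"
      unfolding pa by (simp add: matrix_add_ldistrib madd_rdistrib algebra_simps)
    have pca: "\<phi> (cadj a ** a) = mat 1 + csmult t (\<phi> b) + csmult (cnj t) (\<phi> (cadj b))
        + csmult (cnj t * t) (\<phi> (cadj b ** b))"
      unfolding ca by (simp add: clin_add[OF lin] clin_smult[OF lin] unit)
    have eq: "\<phi> (cadj a ** a) - cadj (\<phi> a) ** \<phi> a = csmult (cnj t) D + csmult (cnj t * t) P"
      unfolding pca cpa D_def P_def by (simp add: algebra_simps)
    have "cadj (csmult (cnj t) D + csmult (cnj t * t) P) = csmult (cnj t) D + csmult (cnj t * t) P"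
      using psd_herm[OF sw[of a]] unfolding eq .
    then have "csmult t (cadj D) + csmult (cnj t * t) P = csmult (cnj t) D + csmult (cnj t * t) P"
      using hP by (simp add: mult.commute)
    then show ?thesis by simp
  qed
  have h1: "cadj D = D" using H[of 1] by simp
  have "csmult \<i> D = csmult (- \<i>) D" using H[of "\<i>"] h1 by simp
  then have "D = 0" by (simp add: csmult_def vec_eq_iff)
  then show ?thesis unfolding D_def by simp
qed

lemma trace_diff: "trace (r ** (X - Y)) = trace (r ** X) - trace (r ** (Y::'n::finite cmat))"
  by (simp add: trace_def matrix_matrix_mult_def sum_subtractf algebra_simps)



lemma chain:
  fixes \<phi> :: "'n::finite cmat \<Rightarrow> 'n cmat" and \<rho> :: "'n cmat"
  assumes us: "unital_schwarz \<phi>" and pd: "pd \<rho>"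
    and inv: "\<And>x. trace (\<rho> ** \<phi> x) = trace (\<rho> ** x)"
  shows "(\<phi> ^^ n) (cadj a ** a) = cadj ((\<phi> ^^ n) a) ** (\<phi> ^^ n) a \<longleftrightarrow>
     trace (\<rho> ** (cadj a ** a)) = trace (\<rho> ** (cadj ((\<phi> ^^ n) a) ** (\<phi> ^^ n) a))"
proof -
  have sw: "\<And>a. psd (\<phi> (cadj a ** a) - cadj (\<phi> a) ** \<phi> a)"
    using us unfolding unital_schwarz_def loewner_ge_def by auto
  define A where "A = (\<lambda>k. (\<phi> ^^ k) a)"
  have AS: "A (Suc k) = \<phi> (A k)" for k by (simp add: A_def)
  define Dk where "Dk = (\<lambda>k. \<phi> (cadj (A k) ** A k) - cadj (A (Suc k)) ** A (Suc k))"
  have psdD: "psd (Dk k)" for k unfolding Dk_def AS by (rule sw)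
  define t where "t = (\<lambda>k. trace (\<rho> ** Dk k))"
  have tpos: "Im (t k) = 0 \<and> Re (t k) \<ge> 0 \<and> (t k = 0 \<longrightarrow> Dk k = 0)" for k
    unfolding t_def by (rule trace_pos[OF pd psdD])
  have invn: "trace (\<rho> ** (\<phi> ^^ m) x) = trace (\<rho> ** x)" for m x
    by (induction m) (simp_all add: inv)
  have tele: "trace (\<rho> ** (cadj a ** a)) = trace (\<rho> ** (cadj (A m) ** A m)) + (\<Sum>k<m. t k)" for m
  proof (induction m)
    case 0 then show ?case by (simp add: A_def)
  next
    case (Suc m)
    have "trace (\<rho> ** (cadj (A m) ** A m)) = trace (\<rho> ** \<phi> (cadj (A m) ** A m))" by (simp add: inv)
    also have "\<dots> = trace (\<rho> ** (cadj (A (Suc m)) ** A (Suc m))) + t m"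
      unfolding t_def Dk_def trace_diff by simp
    finally show ?case using Suc by simp
  qed
  show ?thesis
  proof
    assume "(\<phi> ^^ n) (cadj a ** a) = cadj ((\<phi> ^^ n) a) ** (\<phi> ^^ n) a"
    then show "trace (\<rho> ** (cadj a ** a)) = trace (\<rho> ** (cadj ((\<phi> ^^ n) a) ** (\<phi> ^^ n) a))"
      using invn[of n "cadj a ** a"] by simp
  next
    assume "trace (\<rho> ** (cadj a ** a)) = trace (\<rho> ** (cadj ((\<phi> ^^ n) a) ** (\<phi> ^^ n) a))"
    then have s0: "(\<Sum>k<n. t k) = 0" using tele[of n] by (simp add: A_def)
    have "Re (\<Sum>k<n. t k) = 0" using s0 by simp
    then have "(\<Sum>k<n. Re (t k)) = 0" by simp
    then have "\<forall>k\<in>{..<n}. Re (t k) = 0"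
      using sum_nonneg_eq_0_iff[of "{..<n}" "\<lambda>k. Re (t k)"] tpos by auto
    then have "\<forall>k<n. t k = 0" using tpos by (auto simp: complex_eq_iff)
    then have Dz: "\<forall>k<n. Dk k = 0" using tpos by blast
    have "k \<le> n \<Longrightarrow> (\<phi> ^^ k) (cadj a ** a) = cadj (A k) ** A k" for k
    proof (induction k)
      case 0 then show ?case by (simp add: A_def)
    next
      case (Suc k)
      then have "Dk k = 0" using Dz by simp
      then have "\<phi> (cadj (A k) ** A k) = cadj (A (Suc k)) ** A (Suc k)" unfolding Dk_def by simp
      then show ?case using Suc by simp
    qed
    then show "(\<phi> ^^ n) (cadj a ** a) = cadj ((\<phi> ^^ n) a) ** (\<phi> ^^ n) a" by (simp add: A_def)
  qed
qed

theorem lemma3p1: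
  fixes \<phi> :: "'n::finite cmat \<Rightarrow> 'n cmat" and \<rho> :: "'n cmat" and n :: nat
  assumes "unital_schwarz \<phi>"
    and "primitive_map \<phi>"
    and "pd \<rho>" and "trace \<rho> = 1" and "hs_adjoint \<phi> \<rho> = \<rho>"
  shows "mult_domain (\<phi> ^^ n) =
    {a. winner \<rho> a a = winner \<rho> ((\<phi> ^^ n) a) ((\<phi> ^^ n) a) \<and>
        winner \<rho> (cadj a) (cadj a) = winner \<rho> (cadj ((\<phi> ^^ n) a)) (cadj ((\<phi> ^^ n) a))}"
proof -
  have lin: "clinear_map \<phi>" using assms(1) unfolding unital_schwarz_def by blast
  have hr: "cadj \<rho> = \<rho>" by (rule pd_herm[OF assms(3)])
  have inv: "trace (\<rho> ** \<phi> x) = trace (\<rho> ** x)" for x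
  proof -
    have "trace (\<rho> ** \<phi> x) = hs_inner \<rho> (\<phi> x)" unfolding hs_inner_def hr ..
    also have "\<dots> = hs_inner (hs_adjoint \<phi> \<rho>) x" by (rule adjoint_prop[OF lin])
    also have "\<dots> = trace (\<rho> ** x)" unfolding assms(5) hs_inner_def hr ..
    finally show ?thesis .
  qed
  have starn: "(\<phi> ^^ m) (cadj a) = cadj ((\<phi> ^^ m) a)" for m a
    by (induction m) (simp_all add: schwarz_star[OF assms(1)])
  have w: "winner \<rho> b b = trace (\<rho> ** (cadj b ** b))" for b
    unfolding winner_def by (simp add: matrix_mul_assoc)
  show ?thesis
  proof (rule set_eqI)
    fix a :: "'n cmat"
    note c1 = chain[OF assms(1) assms(3) inv, of n a]
    note c2 = chain[OF assms(1) assms(3) inv, of n "cadj a"]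
    show "a \<in> mult_domain (\<phi> ^^ n) \<longleftrightarrow> a \<in> {a. winner \<rho> a a = winner \<rho> ((\<phi> ^^ n) a) ((\<phi> ^^ n) a) \<and>
        winner \<rho> (cadj a) (cadj a) = winner \<rho> (cadj ((\<phi> ^^ n) a)) (cadj ((\<phi> ^^ n) a))}"
      using c1 c2 unfolding mult_domain_def w by (simp add: starn)
  qed
qed

end
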